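(* For any integer $k>0$ and any homogeneous $f\in\mathbb{C}(x_0,\dots,x_n)$ one has $\eta(\xi^k(f))=k(\deg(f)-k+1)\,\xi^{k-1}(f)$.
   Context: Here $\xi^k(f)=\sum_{|I|=k}\binom{k}{I}x^I\otimes\partial^I f\in\mathbb{C}[x_0,\dots,x_n]\otimes\mathbb{C}(x_0,\dots,x_n)$, with $I=(i_0,\dots,i_n)$ a multi-index, $|I|=i_0+\cdots+i_n$, $\binom{k}{I}=k!/(i_0!\cdots i_n!)$, $x^I=x_0^{i_0}\cdots x_n^{i_n}$, $\partial^I=\partial_{x_0}^{i_0}\cdots\partial_{x_n}^{i_n}$; $\xi^0(f)=1\otimes f$. The operator $\eta=\sum_{j}\partial_{x_j}\otimes x_j$ acts on $\mathbb{C}[x]\otimes\mathbb{C}(x)$ by $\eta(p\otimes g)=\sum_j\partial_{x_j}p\otimes x_jg$. $\deg(f)$ is the homogeneity degree of $f$. *)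

theory Defs
  imports Complex_Main "HOL-Library.Poly_Mapping" "HOL-Computational_Algebra.Fraction_Field"
begin

text \<open>Multivariate polynomials over the complex numbers in the variables x_0, x_1, ...:
  finitely supported maps from monomials (exponent vectors nat =>0 nat) to coefficients.
  Multiplication is the library's convolution product; this type is an integral domain.\<close>
type_synonym mpoly = "(nat \<Rightarrow>\<^sub>0 nat) \<Rightarrow>\<^sub>0 complex"

type_synonym rfun = "mpoly fract"

text \<open>Elements of C[x] (tensor) C(x): since the monomials x^I form a C-basis of C[x],
  an element sum_I x^I (tensor) g_I is the finitely supported map I |-> g_I.\<close>
type_synonym tens = "(nat \<Rightarrow>\<^sub>0 nat) \<Rightarrow>\<^sub>0 rfun"

definition Xp :: "nat \<Rightarrow> mpoly" where
  "Xp j = Poly_Mapping.single (Poly_Mapping.single j 1) 1"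

definition Xr :: "nat \<Rightarrow> rfun" where
  "Xr j = Fract (Xp j) 1"

definition mdeg :: "(nat \<Rightarrow>\<^sub>0 nat) \<Rightarrow> nat" where
  "mdeg m = (\<Sum>j\<in>Poly_Mapping.keys m. Poly_Mapping.lookup m j)"

definition in_vars :: "nat \<Rightarrow> mpoly \<Rightarrow> bool" where
  "in_vars n p \<longleftrightarrow> (\<forall>m\<in>Poly_Mapping.keys p. Poly_Mapping.keys m \<subseteq> {..n})"

text \<open>Homogeneous polynomial of degree a (the zero polynomial is homogeneous of every degree).\<close>
definition homog_poly :: "nat \<Rightarrow> mpoly \<Rightarrow> bool" where
  "homog_poly a p \<longleftrightarrow> (\<forall>m\<in>Poly_Mapping.keys p. mdeg m = a)"

definition pd :: "nat \<Rightarrow> mpoly \<Rightarrow> mpoly" where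
  "pd j p = (\<Sum>m\<in>Poly_Mapping.keys p. Poly_Mapping.single (m - Poly_Mapping.single j 1)
                              (of_nat (Poly_Mapping.lookup m j) * Poly_Mapping.lookup p m))"

text \<open>Partial derivative d/dx_j of a rational function, by the quotient rule
  (well defined, independent of the chosen representation).\<close>
definition rd :: "nat \<Rightarrow> rfun \<Rightarrow> rfun" where
  "rd j r = (THE s. \<forall>p q. q \<noteq> 0 \<and> r = Fract p q \<longrightarrow>
                      s = Fract (pd j p * q - p * pd j q) (q * q))"

definition in_field :: "nat \<Rightarrow> rfun \<Rightarrow> bool" where
  "in_field n f \<longleftrightarrow> (\<exists>p q. q \<noteq> 0 \<and> in_vars n p \<and> in_vars n q \<and> f = Fract p q)"

definition homog_rf :: "nat \<Rightarrow> int \<Rightarrow> rfun \<Rightarrow> bool" where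
  "homog_rf n d f \<longleftrightarrow> (\<exists>p q a b. q \<noteq> 0 \<and> in_vars n p \<and> in_vars n q \<and>
      homog_poly a p \<and> homog_poly b q \<and> d = int a - int b \<and> f = Fract p q)"

definition multi_indices :: "nat \<Rightarrow> nat \<Rightarrow> (nat \<Rightarrow>\<^sub>0 nat) set" where
  "multi_indices n k = {I. Poly_Mapping.keys I \<subseteq> {..n} \<and> (\<Sum>j\<le>n. Poly_Mapping.lookup I j) = k}"

definition multinom :: "nat \<Rightarrow> nat \<Rightarrow> (nat \<Rightarrow>\<^sub>0 nat) \<Rightarrow> nat" where
  "multinom n k I = fact k div (\<Prod>j\<le>n. fact (Poly_Mapping.lookup I j))"

definition dI :: "nat \<Rightarrow> (nat \<Rightarrow>\<^sub>0 nat) \<Rightarrow> rfun \<Rightarrow> rfun" where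
  "dI n I f = foldr (\<lambda>j g. (rd j ^^ Poly_Mapping.lookup I j) g) [0..<Suc n] f"

definition xi :: "nat \<Rightarrow> nat \<Rightarrow> rfun \<Rightarrow> tens" where
  "xi n k f = (\<Sum>I\<in>multi_indices n k.
                 Poly_Mapping.single I (of_nat (multinom n k I) * dI n I f))"

text \<open>eta = sum_j d_{x_j} (tensor) x_j, acting by eta(p (tensor) g) = sum_j d_{x_j} p (tensor) x_j g;
  on the monomial basis d_{x_j} x^I = i_j x^(I - e_j).\<close>
definition eta :: "nat \<Rightarrow> tens \<Rightarrow> tens" where
  "eta n T = (\<Sum>I\<in>Poly_Mapping.keys T. \<Sum>j\<le>n.
       Poly_Mapping.single (I - Poly_Mapping.single j 1)
                           (of_nat (Poly_Mapping.lookup I j) * (Xr j * Poly_Mapping.lookup T I)))"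

definition tscale :: "rfun \<Rightarrow> tens \<Rightarrow> tens" where
  "tscale c T = Poly_Mapping.map (\<lambda>g. c * g) T"

end

theory Submission
  imports Defs
begin

lemma lookup_map0: "g 0 = 0 \<Longrightarrow> Poly_Mapping.lookup (Poly_Mapping.map g T) k = g (Poly_Mapping.lookup T k)"
  by transfer (simp add: when_def)

lemma poly_expand: "(p::'a \<Rightarrow>\<^sub>0 'b::comm_monoid_add) = (\<Sum>m\<in>Poly_Mapping.keys p. Poly_Mapping.single m (Poly_Mapping.lookup p m))"
  by (rule poly_mapping_eqI) (simp add: lookup_sum lookup_single when_def in_keys_iff sum.delta' split: if_splits)

lemma single_sum: "(\<Sum>j\<in>A. Poly_Mapping.single m (g j)) = Poly_Mapping.single m (\<Sum>j\<in>A. g j)"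
  by (induction A rule: infinite_finite_induct) (auto simp: single_add)

lemma pd_superset: fixes p :: mpoly shows "finite S \<Longrightarrow> Poly_Mapping.keys p \<subseteq> S \<Longrightarrow>
   pd j p = (\<Sum>m\<in>S. Poly_Mapping.single (m - Poly_Mapping.single j 1)
                              (of_nat (Poly_Mapping.lookup m j) * Poly_Mapping.lookup p m))"
  unfolding pd_def by (rule sum.mono_neutral_left) (auto simp: in_keys_iff)

lemma pd_add: "pd j (p + q) = pd j p + pd j q"
proof -
  have f: "finite (Poly_Mapping.keys p \<union> Poly_Mapping.keys q)" by simp
  have "Poly_Mapping.keys (p+q) \<subseteq> Poly_Mapping.keys p \<union> Poly_Mapping.keys q" by (rule keys_add)
  then show ?thesis
    by (simp add: pd_superset[OF f] lookup_add distrib_left single_add sum.distrib)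
qed

lemma pd_zero[simp]: "pd j 0 = 0" by (simp add: pd_def)

lemma pd_single: "pd j (Poly_Mapping.single m c) = Poly_Mapping.single (m - Poly_Mapping.single j 1) (of_nat (Poly_Mapping.lookup m j) * c)"
  by (subst pd_superset[of "{m}"]) auto

lemma pd_sum: "pd j (\<Sum>i\<in>A. p i) = (\<Sum>i\<in>A. pd j (p i))"
  by (induction A rule: infinite_finite_induct) (auto simp: pd_add)

lemma pd_uminus: "pd j (- p) = - pd j p"
  using pd_add[of j p "-p"] by (simp add: add_eq_0_iff2)

lemma pd_diff: "pd j (p - q) = pd j p - pd j q"
  using pd_add[of j p "-q"] by (simp add: pd_uminus)

lemma sub_add_e: "0 < Poly_Mapping.lookup m j \<Longrightarrow> m - Poly_Mapping.single j 1 + l = m + l - Poly_Mapping.single j (1::nat)"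
  by (rule poly_mapping_eqI) (auto simp: lookup_add lookup_minus lookup_single when_def)

lemma pd_mono_mult: "pd j (Poly_Mapping.single m a * Poly_Mapping.single l b) =
   pd j (Poly_Mapping.single m a) * Poly_Mapping.single l b + Poly_Mapping.single m a * pd j (Poly_Mapping.single l b)"
proof -
  have A: "Poly_Mapping.single (m - Poly_Mapping.single j 1 + l) (of_nat (Poly_Mapping.lookup m j) * a * b)
     = Poly_Mapping.single (m + l - Poly_Mapping.single j 1) (of_nat (Poly_Mapping.lookup m j) * a * b)"
    by (cases "Poly_Mapping.lookup m j = 0") (simp, subst sub_add_e, auto)
  have B: "Poly_Mapping.single (m + (l - Poly_Mapping.single j 1)) (a * (of_nat (Poly_Mapping.lookup l j) * b))
     = Poly_Mapping.single (m + l - Poly_Mapping.single j 1) (of_nat (Poly_Mapping.lookup l j) * a * b)"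
  proof (cases "Poly_Mapping.lookup l j = 0")
    case True then show ?thesis by simp
  next
    case False
    have e: "m + (l - Poly_Mapping.single j 1) = m + l - Poly_Mapping.single j (1::nat)"
      using False by (intro poly_mapping_eqI) (auto simp: lookup_add lookup_minus lookup_single when_def)
    have c: "a * (of_nat (Poly_Mapping.lookup l j) * b) = of_nat (Poly_Mapping.lookup l j) * a * (b::complex)"
      by (simp only: mult.assoc mult.left_commute)
    show ?thesis unfolding e c ..
  qed
  show ?thesis
    apply (simp only: pd_single mult_single A B lookup_add of_nat_add)
    apply (simp only: single_add[symmetric])
    apply (rule arg_cong[where f="Poly_Mapping.single _"])
    by (simp add: algebra_simps)
qed

lemma pd_mult: "pd j (p * q) = pd j p * q + p * pd j q"
proof -
  have "p * q = (\<Sum>m\<in>Poly_Mapping.keys p. \<Sum>l\<in>Poly_Mapping.keys q. Poly_Mapping.single m (Poly_Mapping.lookup p m) * Poly_Mapping.single l (Poly_Mapping.lookup q l))"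
    by (subst poly_expand[of p], subst poly_expand[of q]) (simp add: sum_product)
  then have "pd j (p*q) = (\<Sum>m\<in>Poly_Mapping.keys p. \<Sum>l\<in>Poly_Mapping.keys q. pd j (Poly_Mapping.single m (Poly_Mapping.lookup p m)) * Poly_Mapping.single l (Poly_Mapping.lookup q l)
     + Poly_Mapping.single m (Poly_Mapping.lookup p m) * pd j (Poly_Mapping.single l (Poly_Mapping.lookup q l)))"
    by (simp add: pd_sum pd_mono_mult)
  also have "\<dots> = pd j p * q + p * pd j q"
  proof -
    have e1: "pd j p * q = (\<Sum>m\<in>Poly_Mapping.keys p. \<Sum>l\<in>Poly_Mapping.keys q. pd j (Poly_Mapping.single m (Poly_Mapping.lookup p m)) * Poly_Mapping.single l (Poly_Mapping.lookup q l))"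
    proof -
      have "pd j p * q = pd j (\<Sum>m\<in>Poly_Mapping.keys p. Poly_Mapping.single m (Poly_Mapping.lookup p m)) * (\<Sum>l\<in>Poly_Mapping.keys q. Poly_Mapping.single l (Poly_Mapping.lookup q l))"
        by (metis poly_expand)
      then show ?thesis by (simp add: pd_sum sum_product)
    qed
    have e2: "p * pd j q = (\<Sum>m\<in>Poly_Mapping.keys p. \<Sum>l\<in>Poly_Mapping.keys q. Poly_Mapping.single m (Poly_Mapping.lookup p m) * pd j (Poly_Mapping.single l (Poly_Mapping.lookup q l)))"
    proof -
      have "p * pd j q = (\<Sum>m\<in>Poly_Mapping.keys p. Poly_Mapping.single m (Poly_Mapping.lookup p m)) * pd j (\<Sum>l\<in>Poly_Mapping.keys q. Poly_Mapping.single l (Poly_Mapping.lookup q l))"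
        by (metis poly_expand)
      then show ?thesis by (simp add: pd_sum sum_product)
    qed
    show ?thesis by (simp add: e1 e2 sum.distrib)
  qed
  finally show ?thesis .
qed

lemma pd_commute: "pd i (pd j p) = pd j (pd i p)"
proof -
  have m: "pd i (pd j (Poly_Mapping.single m c)) = pd j (pd i (Poly_Mapping.single m c))" for m c
  proof (cases "i = j")
    case False
    have "m - Poly_Mapping.single j 1 - Poly_Mapping.single i 1 = m - Poly_Mapping.single i 1 - Poly_Mapping.single (j::nat) (1::nat)"
      by (rule poly_mapping_eqI) (simp add: lookup_minus lookup_single when_def)
    then show ?thesis using False
      by (simp add: pd_single lookup_minus lookup_single mult.left_commute)
  qed simp
  show ?thesis
    by (subst (1 2) poly_expand[of p]) (simp add: pd_sum m)
qed

lemma pd_const: "pd j (Poly_Mapping.single 0 c) = 0"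
  by (simp add: pd_single)

lemma pd_one[simp]: "pd j 1 = 0"
  using pd_const[of j 1] by simp

lemma pd_Xp: "pd j (Xp i) = (if i = j then 1 else 0)"
  by (auto simp: Xp_def pd_single lookup_single)

lemma pd_of_int[simp]: "pd j (of_int c) = 0"
  by (metis pd_const single_of_int)

lemma mdeg_le: "Poly_Mapping.keys m \<subseteq> {..n} \<Longrightarrow> mdeg m = (\<Sum>j\<le>n. Poly_Mapping.lookup m j)"
  unfolding mdeg_def by (rule sum.mono_neutral_left) (auto simp: in_keys_iff)

lemma euler_poly:
  assumes "in_vars n p" "homog_poly a p"
  shows "(\<Sum>j\<le>n. Xp j * pd j p) = of_nat a * p"
proof -
  have m: "(\<Sum>j\<le>n. Xp j * pd j (Poly_Mapping.single m c)) = of_nat a * Poly_Mapping.single m c"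
    if "Poly_Mapping.keys m \<subseteq> {..n}" "mdeg m = a" for m c
  proof -
    have X: "Xp j * pd j (Poly_Mapping.single m c) = Poly_Mapping.single m (of_nat (Poly_Mapping.lookup m j) * c)" for j
    proof (cases "Poly_Mapping.lookup m j = 0")
      case True
      then show ?thesis by (simp add: pd_single)
    next
      case False
      then have e: "Poly_Mapping.single j 1 + (m - Poly_Mapping.single j 1) = m"
        by (intro poly_mapping_eqI) (auto simp: lookup_add lookup_minus lookup_single when_def)
      show ?thesis unfolding Xp_def pd_single mult_single e by simp
    qed
    have "(\<Sum>j\<le>n. Xp j * pd j (Poly_Mapping.single m c)) = (\<Sum>j\<le>n. Poly_Mapping.single m (of_nat (Poly_Mapping.lookup m j) * c))"
      by (rule sum.cong[OF refl X])
    also have "\<dots> = Poly_Mapping.single m (\<Sum>j\<le>n. of_nat (Poly_Mapping.lookup m j) * c)"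
      by (rule single_sum)
    also have "(\<Sum>j\<le>n. of_nat (Poly_Mapping.lookup m j) * c) = of_nat a * (c::complex)"
      using mdeg_le[OF that(1)] that(2) by (simp add: of_nat_sum sum_distrib_right)
    also have "Poly_Mapping.single m (of_nat a * c) = Poly_Mapping.single 0 (of_nat a) * Poly_Mapping.single m c"
      by (subst mult_single) simp
    also have "\<dots> = of_nat a * Poly_Mapping.single m c"
      by simp
    finally show ?thesis .
  qed
  define P where "P = (\<lambda>m. Poly_Mapping.single m (Poly_Mapping.lookup p m))"
  have pe: "p = (\<Sum>m\<in>Poly_Mapping.keys p. P m)" unfolding P_def by (rule poly_expand)
  have "(\<Sum>j\<le>n. Xp j * pd j p) = (\<Sum>j\<le>n. \<Sum>m\<in>Poly_Mapping.keys p. Xp j * pd j (P m))"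
    by (subst pe) (simp only: pd_sum sum_distrib_left)
  also have "\<dots> = (\<Sum>m\<in>Poly_Mapping.keys p. \<Sum>j\<le>n. Xp j * pd j (P m))"
    by (rule sum.swap)
  also have "\<dots> = (\<Sum>m\<in>Poly_Mapping.keys p. of_nat a * P m)"
    unfolding P_def using assms by (intro sum.cong refl m) (auto simp: in_vars_def homog_poly_def)
  also have "\<dots> = of_nat a * p"
    by (subst (2) pe) (simp only: sum_distrib_left)
  finally show ?thesis .
qed

lemma rd_wd:
  fixes p q p' q' :: mpoly
  assumes "p * q' = p' * q"
  shows "(pd j p * q - p * pd j q) * (q' * q') = (pd j p' * q' - p' * pd j q') * (q * q)"
proof -
  have E2: "pd j p * q' + p * pd j q' = pd j p' * q + p' * pd j q"
    using arg_cong[OF assms, of "pd j"] by (simp add: pd_mult)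
  show ?thesis using assms E2 by algebra
qed

lemma rd_Fract: "q \<noteq> 0 \<Longrightarrow> rd j (Fract p q) = Fract (pd j p * q - p * pd j q) (q * q)"
  unfolding rd_def
proof (rule the_equality)
  assume q: "q \<noteq> 0"
  show "\<forall>p' q'. q' \<noteq> 0 \<and> Fract p q = Fract p' q' \<longrightarrow>
        Fract (pd j p * q - p * pd j q) (q * q) = Fract (pd j p' * q' - p' * pd j q') (q' * q')"
  proof (intro allI impI)
    fix p' q' assume h: "q' \<noteq> 0 \<and> Fract p q = Fract p' q'"
    then have "p * q' = p' * q" using q eq_fract(1)[of q q' p p'] by auto
    then show "Fract (pd j p * q - p * pd j q) (q * q) = Fract (pd j p' * q' - p' * pd j q') (q' * q')"
      using q h by (simp add: eq_fract rd_wd)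
  qed
next
  fix s assume q: "q \<noteq> 0" and "\<forall>p' q'. q' \<noteq> 0 \<and> Fract p q = Fract p' q' \<longrightarrow>
        s = Fract (pd j p' * q' - p' * pd j q') (q' * q')"
  then show "s = Fract (pd j p * q - p * pd j q) (q * q)" by blast
qed

lemma rd_Fract1: "rd j (Fract p 1) = Fract (pd j p) 1"
  by (simp add: rd_Fract)

lemma rd_add: "rd j (x + y) = rd j x + rd j y"
proof -
  obtain a b where x: "x = Fract a b" "b \<noteq> 0" by (cases x) auto
  obtain c d where y: "y = Fract c d" "d \<noteq> 0" by (cases y) auto
  have "pd j (a * d + c * b) * (b * d) - (a * d + c * b) * pd j (b * d)
      = (pd j a * b - a * pd j b) * (d * d) + (pd j c * d - c * pd j d) * (b * b)"
    by (simp add: pd_add pd_mult) algebra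
  moreover have "(b * d) * (b * d) = (b * b) * (d * d)" by algebra
  ultimately show ?thesis using x y by (simp add: rd_Fract mult.assoc mult.left_commute)
qed

lemma rd_mult: "rd j (x * y) = rd j x * y + x * rd j y"
proof -
  obtain a b where x: "x = Fract a b" "b \<noteq> 0" by (cases x) auto
  obtain c d where y: "y = Fract c d" "d \<noteq> 0" by (cases y) auto
  have "(pd j (a * c) * (b * d) - a * c * pd j (b * d)) *
        (b * b * d * (b * d * d)) =
        ((pd j a * b - a * pd j b) * c * (b * d * d) + a * (pd j c * d - c * pd j d) * (b * b * d)) *
        (b * d * (b * d))"
    by (simp add: pd_mult) algebra
  then show ?thesis using x y by (simp add: rd_Fract eq_fract)
qed

lemma rd_zero[simp]: "rd j 0 = 0"
  using rd_add[of j 0 0] by (metis add.right_neutral add_left_cancel)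

lemma rd_one[simp]: "rd j 1 = 0"
  using rd_mult[of j 1 1] by (metis mult_1_left mult_1_right add.right_neutral add_left_cancel)

lemma rd_uminus: "rd j (- x) = - rd j x"
  using rd_add[of j x "-x"] by (simp add: add_eq_0_iff2)

lemma rd_diff: "rd j (x - y) = rd j x - rd j y"
  using rd_add[of j x "-y"] by (simp add: rd_uminus)

lemma rd_of_nat[simp]: "rd j (of_nat m) = 0"
  by (induction m) (simp_all add: rd_add)

lemma rd_of_int[simp]: "rd j (of_int z) = 0"
  by (cases z) (simp_all add: rd_uminus rd_diff)

lemma rd_sum: "rd j (\<Sum>i\<in>A. g i) = (\<Sum>i\<in>A. rd j (g i))"
  by (induction A rule: infinite_finite_induct) (auto simp: rd_add)

lemma rd_Xr: "rd i (Xr j) = (if j = i then 1 else 0)"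
  by (simp add: Xr_def rd_Fract1 pd_Xp fract_collapse Zero_fract_def[symmetric])

lemma rd_commute: "rd i (rd j x) = rd j (rd i x)"
proof -
  define C where "C x = rd i (rd j x) - rd j (rd i x)" for x
  have Cm: "C (x * y) = C x * y + x * C y" for x y
    unfolding C_def by (simp add: rd_mult rd_add algebra_simps)
  have C1: "C (Fract p 1) = 0" for p
    unfolding C_def by (simp add: rd_Fract1 pd_commute)
  have "C (Fract p q) = 0" if "q \<noteq> 0" for p q
  proof -
    have e: "Fract p 1 = Fract q 1 * Fract p q" using that by (simp add: eq_fract)
    have "0 = C (Fract q 1 * Fract p q)" using C1[of p] by (simp add: e)
    also have "\<dots> = Fract q 1 * C (Fract p q)" by (simp only: Cm C1 mult_zero_left add_0)
    finally have "0 = Fract q 1 * C (Fract p q)" .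
    moreover have "Fract q 1 \<noteq> 0" using that by (simp add: Zero_fract_def eq_fract)
    ultimately show ?thesis by simp
  qed
  then have "C x = 0" by (cases x) auto
  then show ?thesis unfolding C_def by simp
qed

definition EE :: "nat \<Rightarrow> rfun \<Rightarrow> rfun" where
  "EE n g = (\<Sum>j\<le>n. Xr j * rd j g)"

lemma fract_sum: "D \<noteq> 0 \<Longrightarrow> (\<Sum>j\<in>A. Fract (N j) D) = Fract (\<Sum>j\<in>A. N j) D"
proof (induction A rule: infinite_finite_induct)
  case (infinite A) then show ?case by (simp add: fract_collapse)
next
  case empty then show ?case by (simp add: fract_collapse)
next
  case (insert x F)
  then show ?case by (simp add: eq_fract algebra_simps)
qed

lemma euler_rf:
  assumes "homog_rf n d f"
  shows "EE n f = of_int d * f"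
proof -
  obtain p q a b where h: "q \<noteq> 0" "in_vars n p" "in_vars n q" "homog_poly a p" "homog_poly b q"
    "d = int a - int b" "f = Fract p q"
    using assms unfolding homog_rf_def by blast
  have qq: "q * q \<noteq> 0" using h(1) by simp
  have "EE n f = (\<Sum>j\<le>n. Fract (Xp j * (pd j p * q - p * pd j q)) (q * q))"
    unfolding EE_def h(7) using h(1) by (simp add: rd_Fract Xr_def)
  also have "\<dots> = Fract (\<Sum>j\<le>n. Xp j * (pd j p * q - p * pd j q)) (q * q)"
    by (rule fract_sum[OF qq])
  also have "(\<Sum>j\<le>n. Xp j * (pd j p * q - p * pd j q)) = (\<Sum>j\<le>n. Xp j * pd j p) * q - p * (\<Sum>j\<le>n. Xp j * pd j q)"
    by (simp add: right_diff_distrib sum_subtractf sum_distrib_left sum_distrib_right mult_ac)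
  also have "\<dots> = of_nat a * p * q - p * (of_nat b * q)"
    using euler_poly[OF h(2,4)] euler_poly[OF h(3,5)] by simp
  finally have 1: "EE n f = Fract (of_nat a * p * q - p * (of_nat b * q)) (q * q)" .
  have "of_int d * f = (Fract (of_nat a) 1 - Fract (of_nat b) 1) * Fract p q"
    by (simp add: h(6,7) of_nat_fract[symmetric])
  also have "\<dots> = Fract ((of_nat a - of_nat b) * p) q" by simp
  finally have 2: "of_int d * f = Fract ((of_nat a - of_nat b) * p) q" .
  show ?thesis unfolding 1 2 using h(1) by (simp add: eq_fract) algebra
qed

lemma EE_step:
  assumes "i \<le> n" "EE n g = of_int z * g"
  shows "EE n (rd i g) = of_int (z - 1) * rd i g"
proof -
  have "rd i (EE n g) = (\<Sum>j\<le>n. rd i (Xr j) * rd j g + Xr j * rd i (rd j g))"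
    unfolding EE_def by (simp add: rd_sum rd_mult)
  also have "\<dots> = (\<Sum>j\<le>n. (if j = i then 1 else 0) * rd j g) + EE n (rd i g)"
    unfolding EE_def by (simp add: sum.distrib rd_Xr rd_commute[of i])
  also have "(\<Sum>j\<le>n. (if j = i then 1 else 0) * rd j g) = (\<Sum>j\<le>n. (if j = i then rd j g else 0))"
    by (rule sum.cong) auto
  also have "\<dots> = rd i g"
    using assms(1) by simp
  finally have "rd i (EE n g) = rd i g + EE n (rd i g)" .
  moreover have "rd i (EE n g) = of_int z * rd i g"
    by (simp add: assms(2) rd_mult)
  ultimately show ?thesis by (simp add: algebra_simps)
qed

lemma EE_pow:
  assumes "i \<le> n" "EE n g = of_int z * g"
  shows "EE n ((rd i ^^ m) g) = of_int (z - int m) * (rd i ^^ m) g"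
proof (induction m)
  case 0 then show ?case using assms by simp
next
  case (Suc m)
  then show ?case using EE_step[OF assms(1) Suc] by (simp add: algebra_simps)
qed

lemma EE_foldr:
  assumes "set js \<subseteq> {..n}" "EE n f = of_int z * f"
  shows "EE n (foldr (\<lambda>j g. (rd j ^^ h j) g) js f) = of_int (z - int (sum_list (map h js))) * foldr (\<lambda>j g. (rd j ^^ h j) g) js f"
  using assms(1)
proof (induction js)
  case Nil then show ?case using assms(2) by simp
next
  case (Cons a js)
  then show ?case using EE_pow[of a n "foldr (\<lambda>j g. (rd j ^^ h j) g) js f" "z - int (sum_list (map h js))" "h a"]
    by (simp add: algebra_simps)
qed

lemma rd_pow_commute: "rd i ((rd j ^^ m) x) = (rd j ^^ m) (rd i x)"
proof (induction m)
  case (Suc m)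
  have "rd i ((rd j ^^ Suc m) x) = rd j (rd i ((rd j ^^ m) x))" using rd_commute by simp
  then show ?case using Suc by simp
qed simp

lemma rd_foldr_commute: "rd i (foldr (\<lambda>j g. (rd j ^^ h j) g) js x) = foldr (\<lambda>j g. (rd j ^^ h j) g) js (rd i x)"
  by (induction js) (simp_all add: rd_pow_commute)

lemma foldr_shift:
  assumes "distinct js" "i \<in> set js"
  shows "foldr (\<lambda>j g. (rd j ^^ (h(i := Suc (h i))) j) g) js f = rd i (foldr (\<lambda>j g. (rd j ^^ h j) g) js f)"
  using assms
proof (induction js)
  case Nil then show ?case by simp
next
  case (Cons a js)
  show ?case
  proof (cases "a = i")
    case True
    then have "i \<notin> set js" using Cons.prems by simp
    then have "foldr (\<lambda>j g. (rd j ^^ (h(i := Suc (h i))) j) g) js f = foldr (\<lambda>j g. (rd j ^^ h j) g) js f"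
      by (intro foldr_cong) auto
    then show ?thesis using True by (simp add: funpow_Suc_right del: funpow.simps) (simp add: rd_pow_commute)
  next
    case False
    then show ?thesis using Cons by (simp add: rd_pow_commute)
  qed
qed

abbreviation ee :: "nat \<Rightarrow> nat \<Rightarrow>\<^sub>0 nat" where "ee j \<equiv> Poly_Mapping.single j 1"

lemma keys_sub_iff: "Poly_Mapping.keys (I::nat \<Rightarrow>\<^sub>0 nat) \<subseteq> {..n} \<longleftrightarrow> (\<forall>i. n < i \<longrightarrow> Poly_Mapping.lookup I i = 0)"
proof
  assume K: "Poly_Mapping.keys I \<subseteq> {..n}"
  show "\<forall>i. n < i \<longrightarrow> Poly_Mapping.lookup I i = 0"
  proof (intro allI impI)
    fix i assume "n < i"
    have "i \<notin> Poly_Mapping.keys I"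
    proof
      assume "i \<in> Poly_Mapping.keys I"
      then have "i \<le> n" using K by auto
      with \<open>n < i\<close> show False by simp
    qed
    then show "Poly_Mapping.lookup I i = 0" by (simp add: in_keys_iff)
  qed
next
  assume H: "\<forall>i. n < i \<longrightarrow> Poly_Mapping.lookup I i = 0"
  show "Poly_Mapping.keys I \<subseteq> {..n}"
  proof
    fix t assume "t \<in> Poly_Mapping.keys I"
    then have "Poly_Mapping.lookup I t \<noteq> 0" by (simp add: in_keys_iff)
    then have "\<not> n < t" using H[rule_format, of t] by auto
    then show "t \<in> {..n}" by simp
  qed
qed

lemma mi_iff: "I \<in> multi_indices n k \<longleftrightarrow> (\<forall>i. n < i \<longrightarrow> Poly_Mapping.lookup I i = 0) \<and> (\<Sum>j\<le>n. Poly_Mapping.lookup I j) = k"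
  unfolding multi_indices_def keys_sub_iff by simp

lemma finite_mi: "finite (multi_indices n k)"
proof -
  have "Poly_Mapping.lookup ` multi_indices n k \<subseteq>
     {g. \<forall>x. (x \<in> {..n} \<longrightarrow> g x \<in> {..k}) \<and> (x \<notin> {..n} \<longrightarrow> g x = 0)}"
  proof -
    have *: "\<forall>x. (x \<in> {..n} \<longrightarrow> Poly_Mapping.lookup I x \<in> {..k}) \<and> (x \<notin> {..n} \<longrightarrow> Poly_Mapping.lookup I x = 0)"
      if I: "I \<in> multi_indices n k" for I
    proof (intro allI conjI impI)
      fix x
      assume x: "x \<in> {..n}"
      have "Poly_Mapping.lookup I x \<le> (\<Sum>j\<le>n. Poly_Mapping.lookup I j)"
        by (rule member_le_sum) (use x in auto)
      then show "Poly_Mapping.lookup I x \<in> {..k}"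
        using I unfolding mi_iff by simp
    next
      fix x
      show "x \<notin> {..n} \<Longrightarrow> Poly_Mapping.lookup I x = 0" using I unfolding mi_iff by auto
    qed
    show ?thesis
    proof (rule subsetI)
      fix g assume "g \<in> Poly_Mapping.lookup ` multi_indices n k"
      then obtain I where "I \<in> multi_indices n k" "g = Poly_Mapping.lookup I" by blast
      then show "g \<in> {g. \<forall>x. (x \<in> {..n} \<longrightarrow> g x \<in> {..k}) \<and> (x \<notin> {..n} \<longrightarrow> g x = 0)}"
        using *[of I] by simp
    qed
  qed
  moreover have "finite {g. \<forall>x. (x \<in> {..n} \<longrightarrow> g x \<in> {..k}) \<and> (x \<notin> {..n} \<longrightarrow> g x = (0::nat))}"
    by (rule finite_set_of_finite_funs) auto
  ultimately have "finite (Poly_Mapping.lookup ` multi_indices n k)" by (rule finite_subset)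
  moreover have "inj_on Poly_Mapping.lookup (multi_indices n k)"
    by (rule inj_onI) (rule poly_mapping_eqI, simp)
  ultimately show ?thesis by (rule finite_imageD)
qed

lemma lookup_xi: "Poly_Mapping.lookup (xi n k f) J =
   (if J \<in> multi_indices n k then of_nat (multinom n k J) * dI n J f else 0)"
proof -
  have "Poly_Mapping.lookup (xi n k f) J = (\<Sum>I\<in>multi_indices n k.
      (if I = J then of_nat (multinom n k I) * dI n I f else 0))"
    unfolding xi_def lookup_sum by (intro sum.cong refl) (simp add: lookup_single when_def)
  also have "\<dots> = (if J \<in> multi_indices n k then of_nat (multinom n k J) * dI n J f else 0)"
    by (rule sum.delta[OF finite_mi])
  finally show ?thesis .
qed

lemma lookup_tscale: "Poly_Mapping.lookup (tscale c T) J = c * Poly_Mapping.lookup T J"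
  unfolding tscale_def by (rule lookup_map0) simp

lemma lookup_eta: "Poly_Mapping.lookup (eta n T) J =
   (\<Sum>j\<le>n. of_nat (Poly_Mapping.lookup J j + 1) * (Xr j * Poly_Mapping.lookup T (J + ee j)))"
proof -
  have "Poly_Mapping.lookup (eta n T) J = (\<Sum>j\<le>n. \<Sum>I\<in>Poly_Mapping.keys T.
      (if I - ee j = J then of_nat (Poly_Mapping.lookup I j) * (Xr j * Poly_Mapping.lookup T I) else 0))"
    unfolding eta_def lookup_sum by (subst sum.swap) (simp add: lookup_single when_def)
  also have "\<dots> = (\<Sum>j\<le>n. \<Sum>I\<in>Poly_Mapping.keys T.
      (if I = J + ee j then of_nat (Poly_Mapping.lookup J j + 1) * (Xr j * Poly_Mapping.lookup T (J + ee j)) else 0))"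
  proof (intro sum.cong refl)
    fix j I
    show "(if I - ee j = J then of_nat (Poly_Mapping.lookup I j) * (Xr j * Poly_Mapping.lookup T I) else 0) =
      (if I = J + ee j then of_nat (Poly_Mapping.lookup J j + 1) * (Xr j * Poly_Mapping.lookup T (J + ee j)) else 0)"
    proof (cases "I = J + ee j")
      case True
      have "I - ee j = J" unfolding True
        by (rule poly_mapping_eqI) (simp add: lookup_add lookup_minus)
      then show ?thesis using True by (simp add: lookup_add)
    next
      case False
      have "Poly_Mapping.lookup I j = 0" if "I - ee j = J"
      proof (rule ccontr)
        assume "Poly_Mapping.lookup I j \<noteq> 0"
        then have "I = J + ee j" unfolding that[symmetric]
          by (intro poly_mapping_eqI) (auto simp: lookup_add lookup_minus lookup_single when_def)
        with False show False by simp
      qed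
      then show ?thesis using False by auto
    qed
  qed
  also have "\<dots> = (\<Sum>j\<le>n. of_nat (Poly_Mapping.lookup J j + 1) * (Xr j * Poly_Mapping.lookup T (J + ee j)))"
    by (intro sum.cong refl) (auto simp: in_keys_iff)
  finally show ?thesis .
qed

lemma lookup_plus_ee: "Poly_Mapping.lookup (J + ee i) j = Poly_Mapping.lookup J j + (if j = i then 1 else 0)"
  by (simp add: lookup_add lookup_single when_def)

lemma mi_shift:
  assumes "i \<le> n" "k > 0"
  shows "J + ee i \<in> multi_indices n k \<longleftrightarrow> J \<in> multi_indices n (k - 1)"
proof -
  have "(\<Sum>j\<le>n. Poly_Mapping.lookup (J + ee i) j) = (\<Sum>j\<le>n. Poly_Mapping.lookup J j) + 1"
  proof -
    have "(\<Sum>j\<le>n. Poly_Mapping.lookup (J + ee i) j) = (\<Sum>j\<le>n. Poly_Mapping.lookup J j + (if j = i then 1 else 0))"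
      by (rule sum.cong) (simp_all add: lookup_add lookup_single when_def)
    then show ?thesis using assms(1) by (simp add: sum.distrib)
  qed
  moreover have "(\<forall>j. n < j \<longrightarrow> Poly_Mapping.lookup (J + ee i) j = 0) \<longleftrightarrow> (\<forall>j. n < j \<longrightarrow> Poly_Mapping.lookup J j = 0)"
    using assms(1) by (auto simp: lookup_add lookup_single when_def)
  ultimately show ?thesis using assms(2) unfolding mi_iff by auto
qed

lemma prod_fact_dvd: "(\<Prod>j\<in>A. fact (g j) :: nat) dvd fact (\<Sum>j\<in>A. g j)"
proof (induction A rule: infinite_finite_induct)
  case (insert x F)
  have "(\<Prod>j\<in>insert x F. fact (g j) :: nat) = fact (g x) * (\<Prod>j\<in>F. fact (g j))" using insert by simp
  also have "\<dots> dvd fact (g x) * fact (\<Sum>j\<in>F. g j)" using insert by simp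
  also have "\<dots> dvd fact (g x + (\<Sum>j\<in>F. g j))" by (rule fact_fact_dvd_fact)
  finally show ?case using insert by simp
qed auto

lemma multinom_shift:
  assumes J: "J \<in> multi_indices n (k - 1)" and i: "i \<le> n" and k: "k > 0"
  shows "(Poly_Mapping.lookup J i + 1) * multinom n k (J + ee i) = k * multinom n (k - 1) J"
proof -
  define P where "P = (\<Prod>j\<le>n. fact (Poly_Mapping.lookup J j) :: nat)"
  have sJ: "(\<Sum>j\<le>n. Poly_Mapping.lookup J j) = k - 1" using J unfolding mi_iff by simp
  have sJ': "(\<Sum>j\<le>n. Poly_Mapping.lookup (J + ee i) j) = k"
    using J mi_shift[OF i k, of J] unfolding mi_iff by simp
  have P': "(\<Prod>j\<le>n. fact (Poly_Mapping.lookup (J + ee i) j) :: nat) = P * (Poly_Mapping.lookup J i + 1)"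
  proof -
    have "(\<Prod>j\<le>n. fact (Poly_Mapping.lookup (J + ee i) j) :: nat)
        = (\<Prod>j\<le>n. fact (Poly_Mapping.lookup J j) * (if j = i then Poly_Mapping.lookup J i + 1 else 1))"
      by (intro prod.cong refl) (auto simp: lookup_add lookup_single when_def)
    also have "\<dots> = P * (Poly_Mapping.lookup J i + 1)"
      unfolding P_def prod.distrib using i by (simp add: prod.delta)
    finally show ?thesis .
  qed
  have d1: "P dvd fact (k - 1)" unfolding P_def sJ[symmetric] by (rule prod_fact_dvd)
  have d2: "P * (Poly_Mapping.lookup J i + 1) dvd fact k" unfolding P'[symmetric]
    using prod_fact_dvd[of "\<lambda>j. Poly_Mapping.lookup (J + ee i) j" "{..n}"] sJ' by simp
  from d1 obtain m where m: "fact (k - 1) = P * m" by (rule dvdE)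
  from d2 obtain M where M: "fact k = P * (Poly_Mapping.lookup J i + 1) * M" by (rule dvdE)
  have Ppos: "P > 0" unfolding P_def by (simp add: prod_pos)
  have mm: "multinom n (k - 1) J = m" unfolding multinom_def P_def[symmetric] m using Ppos by simp
  have MM: "multinom n k (J + ee i) = M" unfolding multinom_def P' M using Ppos by simp
  have fk: "fact k = k * fact (k - 1)" using fact_reduce[OF k, where 'a=nat] by simp
  have "P * ((Poly_Mapping.lookup J i + 1) * M) = fact k" using M by (simp only: mult.assoc)
  also have "\<dots> = P * (k * m)" unfolding fk m by (simp only: mult.left_commute)
  finally have "P * ((Poly_Mapping.lookup J i + 1) * M) = P * (k * m)" .
  then show ?thesis using Ppos mm MM by simp
qed

lemma lookup_ee_fun: "(\<lambda>j. Poly_Mapping.lookup (J + ee i) j) = (Poly_Mapping.lookup J)(i := Suc (Poly_Mapping.lookup J i))"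
  by (rule ext) (simp add: lookup_add lookup_single when_def)

lemma dI_shift:
  assumes "i \<le> n"
  shows "dI n (J + ee i) f = rd i (dI n J f)"
proof -
  have d: "distinct [0..<Suc n]" by simp
  have m: "i \<in> set [0..<Suc n]" using assms by (simp only: set_upt atLeastLessThan_iff) simp
  show ?thesis
    unfolding dI_def lookup_ee_fun by (rule foldr_shift[OF d m])
qed

lemma EE_dI:
  assumes "homog_rf n d f" "J \<in> multi_indices n m"
  shows "EE n (dI n J f) = of_int (d - int m) * dI n J f"
proof -
  have s: "sum_list (map (Poly_Mapping.lookup J) [0..<Suc n]) = m"
  proof -
    have "sum_list (map (Poly_Mapping.lookup J) [0..<Suc n]) = sum (Poly_Mapping.lookup J) {..n}"
      by (simp only: sum_set_upt_conv_sum_list_nat[symmetric] set_upt atLeast0LessThan lessThan_Suc_atMost)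
    then show ?thesis using assms(2) unfolding mi_iff by simp
  qed
  have sub: "set [0..<Suc n] \<subseteq> {..n}" by (simp only: set_upt) auto
  show ?thesis unfolding dI_def
    using EE_foldr[OF sub euler_rf[OF assms(1)], of "Poly_Mapping.lookup J"] unfolding s .
qed

theorem lemma4p3:
  fixes n k :: nat and d :: int and f :: rfun
  assumes "k > 0"
    and "homog_rf n d f"
  shows "eta n (xi n k f) = tscale (of_int (int k * (d - int k + 1))) (xi n (k - 1) f)"
proof (rule poly_mapping_eqI)
  fix J
  show "Poly_Mapping.lookup (eta n (xi n k f)) J = Poly_Mapping.lookup (tscale (of_int (int k * (d - int k + 1))) (xi n (k - 1) f)) J"
  proof (cases "J \<in> multi_indices n (k - 1)")
    case True
    define M where "M = multinom n (k - 1) J"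
    define g where "g = dI n J f"
    have "Poly_Mapping.lookup (eta n (xi n k f)) J =
       (\<Sum>j\<le>n. of_nat (k * M) * (Xr j * rd j g))"
      unfolding lookup_eta
    proof (rule sum.cong[OF refl])
      fix j assume j: "j \<in> {..n}"
      then have jn: "j \<le> n" by simp
      have mem: "J + ee j \<in> multi_indices n k" using mi_shift[OF jn assms(1)] True by simp
      have "of_nat (Poly_Mapping.lookup J j + 1) * (Xr j * Poly_Mapping.lookup (xi n k f) (J + ee j))
          = of_nat ((Poly_Mapping.lookup J j + 1) * multinom n k (J + ee j)) * (Xr j * rd j g)"
        unfolding lookup_xi g_def using mem dI_shift[OF jn] by (simp add: algebra_simps)
      also have "\<dots> = of_nat (k * M) * (Xr j * rd j g)"
        unfolding M_def using multinom_shift[OF True jn assms(1)] by simp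
      finally show "of_nat (Poly_Mapping.lookup J j + 1) * (Xr j * Poly_Mapping.lookup (xi n k f) (J + ee j))
          = of_nat (k * M) * (Xr j * rd j g)" .
    qed
    also have "\<dots> = of_nat (k * M) * EE n g"
      unfolding EE_def by (simp add: sum_distrib_left)
    also have "\<dots> = of_nat (k * M) * (of_int (d - int (k - 1)) * g)"
      unfolding g_def using EE_dI[OF assms(2) True] by simp
    also have "\<dots> = (of_int (int k * int M * (d - int (k - 1))) :: rfun) * g"
      by (simp add: mult.assoc)
    also have "int k * int M * (d - int (k - 1)) = int k * (d - int k + 1) * int M"
      using assms(1) by (simp add: of_nat_diff algebra_simps)
    also have "(of_int (int k * (d - int k + 1) * int M) :: rfun) * g
        = Poly_Mapping.lookup (tscale (of_int (int k * (d - int k + 1))) (xi n (k - 1) f)) J"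
      unfolding lookup_tscale lookup_xi M_def g_def using True by (simp add: mult.assoc)
    finally show ?thesis .
  next
    case False
    have "Poly_Mapping.lookup (eta n (xi n k f)) J = (\<Sum>j\<le>n. 0)"
      unfolding lookup_eta
    proof (rule sum.cong[OF refl])
      fix j assume j: "j \<in> {..n}"
      then have jn: "j \<le> n" by simp
      have "J + ee j \<notin> multi_indices n k" using mi_shift[OF jn assms(1)] False by simp
      then show "of_nat (Poly_Mapping.lookup J j + 1) * (Xr j * Poly_Mapping.lookup (xi n k f) (J + ee j)) = 0"
        unfolding lookup_xi by simp
    qed
    also have "\<dots> = Poly_Mapping.lookup (tscale (of_int (int k * (d - int k + 1))) (xi n (k - 1) f)) J"
      unfolding lookup_tscale lookup_xi using False by simp
    finally show ?thesis .
  qed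
qed

end
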